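(* Let $n,m\ge 1$, let $\mu\in\mathbb{R}^n_{\ge 0}$ and $\nu\in\mathbb{R}^m_{\ge 0}$ be probability vectors (nonnegative entries summing to $1$), and let $D_X\in\mathbb{R}^{n\times n}$, $D_Y\in\mathbb{R}^{m\times m}$ be symmetric matrices. Let $C_1=\{\pi\in\mathbb{R}^{n\times m}:\pi\ge 0,\ \pi\mathbf{1}_m=\mu\}$ and $C_2=\{\pi\in\mathbb{R}^{n\times m}:\pi\ge 0,\ \pi^T\mathbf{1}_n=\nu\}$, and let $f(\pi)=-\mathrm{Tr}(D_X\pi D_Y\pi^T)$. Let $$\mathcal{X}=\{\pi\in C_1\cap C_2:\ 0\in\nabla f(\pi)+\mathcal{N}_{C_1}(\pi)+\mathcal{N}_{C_2}(\pi)\}$$ be the critical point set of the problem $\min\{f(\pi):\pi\in C_1\cap C_2\}$. Then there exist scalars $\epsilon>0$ and $\tau>0$ such that for every $\pi\in\mathbb{R}^{n\times m}$ with $\|\pi-\mathrm{proj}_{C_1\cap C_2}(\pi+D_X\pi D_Y)\|\le\epsilon$ we have $$\mathrm{dist}(\pi,\mathcal{X})\le\tau\,\|\pi-\mathrm{proj}_{C_1\cap C_2}(\pi+D_X\pi D_Y)\|.$$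
   Context: $\|\cdot\|$ is the Frobenius (entrywise $\ell_2$) norm on $\mathbb{R}^{n\times m}$; $\mathrm{dist}(x,C)=\min_{y\in C}\|x-y\|$ and $\mathrm{proj}_C(x)=\arg\min_{y\in C}\|x-y\|$ for a closed convex set $C$. $\mathcal{N}_C(\pi)$ denotes the normal cone of the convex set $C$ at $\pi$. $\pi\ge0$ means entrywise nonnegativity; $\mathbf{1}_k$ is the all-ones vector in $\mathbb{R}^k$. *)

theory Defs
  imports "HOL-Analysis.Analysis"
begin

text \<open>Matrices in R^{n x m} are modelled as real^'m^'n (rows indexed by 'n).
  The norm on this type is the Frobenius norm.\<close>

definition normal_cone :: "'a::real_inner set \<Rightarrow> 'a \<Rightarrow> 'a set" where
  "normal_cone C x = {v. \<forall>y\<in>C. inner v (y - x) \<le> 0}"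

definition C1 :: "real^'n \<Rightarrow> (real^'m^'n) set" where
  "C1 \<mu> = {p. (\<forall>i j. 0 \<le> p $ i $ j) \<and> p *v (\<chi> j. 1) = \<mu>}"

definition C2 :: "real^'m \<Rightarrow> (real^'m^'n) set" where
  "C2 \<nu> = {p. (\<forall>i j. 0 \<le> p $ i $ j) \<and> transpose p *v (\<chi> i. 1) = \<nu>}"

definition gw_obj :: "real^'n^'n \<Rightarrow> real^'m^'m \<Rightarrow> real^'m^'n \<Rightarrow> real" where
  "gw_obj DX DY p = - trace (DX ** p ** DY ** transpose p)"

definition crit_set :: "real^'n \<Rightarrow> real^'m \<Rightarrow> real^'n^'n \<Rightarrow> real^'m^'m \<Rightarrow> (real^'m^'n) set" where
  "crit_set \<mu> \<nu> DX DY = {p \<in> C1 \<mu> \<inter> C2 \<nu>. \<exists>g u v.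
     (gw_obj DX DY has_derivative (\<lambda>h. inner g h)) (at p) \<and>
     u \<in> normal_cone (C1 \<mu>) p \<and> v \<in> normal_cone (C2 \<nu>) p \<and> g + u + v = 0}"

end

theory Submission
  imports Defs
begin
lemma span_image_sum:
  fixes a :: "'i \<Rightarrow> 'a::real_vector"
  assumes "finite S" "x \<in> span (a ` S)"
  shows "\<exists>u. x = (\<Sum>j\<in>S. u j *\<^sub>R a j)"
proof -
  define T where "T = {x. \<exists>u. x = (\<Sum>j\<in>S. u j *\<^sub>R a j)}"
  have "subspace T" unfolding subspace_def T_def
  proof (intro conjI ballI allI)
    show "0 \<in> {x. \<exists>u. x = (\<Sum>j\<in>S. u j *\<^sub>R a j)}" by (auto intro: exI[of _ "\<lambda>_. 0"])
  next
    fix x y assume "x \<in> {x. \<exists>u. x = (\<Sum>j\<in>S. u j *\<^sub>R a j)}" "y \<in> {x. \<exists>u. x = (\<Sum>j\<in>S. u j *\<^sub>R a j)}"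
    then obtain u v where "x = (\<Sum>j\<in>S. u j *\<^sub>R a j)" "y = (\<Sum>j\<in>S. v j *\<^sub>R a j)" by auto
    then show "x + y \<in> {x. \<exists>u. x = (\<Sum>j\<in>S. u j *\<^sub>R a j)}"
      by (auto intro!: exI[of _ "\<lambda>j. u j + v j"] simp: scaleR_add_left sum.distrib)
  next
    fix c :: real and x assume "x \<in> {x. \<exists>u. x = (\<Sum>j\<in>S. u j *\<^sub>R a j)}"
    then obtain u where "x = (\<Sum>j\<in>S. u j *\<^sub>R a j)" by auto
    then show "c *\<^sub>R x \<in> {x. \<exists>u. x = (\<Sum>j\<in>S. u j *\<^sub>R a j)}"
      by (auto intro!: exI[of _ "\<lambda>j. c * u j"] simp: scaleR_sum_right)
  qed
  moreover have "a ` S \<subseteq> T"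
  proof
    fix x assume "x \<in> a ` S"
    then obtain j where j: "j \<in> S" "x = a j" by auto
    have "(\<Sum>i\<in>S. (if i = j then 1 else 0) *\<^sub>R a i) = (\<Sum>i\<in>S. (if i = j then a i else 0))"
      by (rule sum.cong) auto
    also have "\<dots> = a j" using assms(1) j(1) by (simp add: sum.delta)
    finally show "x \<in> T" unfolding T_def using j
      by (intro CollectI exI[of _ "\<lambda>i. if i = j then 1 else 0"]) auto
  qed
  ultimately have "span (a ` S) \<subseteq> T" by (rule span_minimal[rotated])
  then show ?thesis using assms(2) unfolding T_def by auto
qed

lemma biorth:
  fixes a :: "'i \<Rightarrow> 'a::euclidean_space"
  assumes fin: "finite J" and ind: "\<forall>m. (\<Sum>j\<in>J. m j *\<^sub>R a j) = 0 \<longrightarrow> (\<forall>j\<in>J. m j = 0)"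
    and i: "i \<in> J"
  shows "\<exists>w. inner w (a i) = 1 \<and> (\<forall>j\<in>J. j \<noteq> i \<longrightarrow> inner w (a j) = 0)"
proof -
  obtain y z where yz: "y \<in> span (a ` (J - {i}))"
      "\<And>w. w \<in> span (a ` (J - {i})) \<Longrightarrow> orthogonal z w" "a i = y + z"
    using orthogonal_subspace_decomp_exists by blast
  have z0: "z \<noteq> 0"
  proof
    assume "z = 0"
    then have "a i \<in> span (a ` (J - {i}))" using yz by simp
    then obtain u where u: "a i = (\<Sum>j\<in>J - {i}. u j *\<^sub>R a j)"
      using span_image_sum[of "J - {i}" "a i" a] fin by auto
    define m where "m j = (if j = i then -1 else u j)" for j
    have "(\<Sum>j\<in>J. m j *\<^sub>R a j) = m i *\<^sub>R a i + (\<Sum>j\<in>J - {i}. m j *\<^sub>R a j)"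
      using fin i by (simp add: sum.remove)
    also have "(\<Sum>j\<in>J - {i}. m j *\<^sub>R a j) = (\<Sum>j\<in>J - {i}. u j *\<^sub>R a j)"
      by (rule sum.cong) (auto simp: m_def)
    finally have "(\<Sum>j\<in>J. m j *\<^sub>R a j) = 0" using u by (simp add: m_def)
    then have "m i = 0" using ind i by blast
    then show False by (simp add: m_def)
  qed
  have "inner z y = 0" using yz(2)[OF yz(1)] by (simp add: orthogonal_def)
  then have zi: "inner z (a i) = inner z z" using yz(3) by (simp add: inner_add_right)
  have zz: "inner z z > 0" using z0 by simp
  show ?thesis
  proof (intro exI[of _ "(1 / inner z z) *\<^sub>R z"] conjI ballI impI)
    show "inner ((1 / inner z z) *\<^sub>R z) (a i) = 1" using zi zz by simp
  next
    fix j assume "j \<in> J" "j \<noteq> i"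
    then have "a j \<in> span (a ` (J - {i}))" by (intro span_base) auto
    then have "inner z (a j) = 0" using yz(2) by (simp add: orthogonal_def)
    then show "inner ((1 / inner z z) *\<^sub>R z) (a j) = 0" by simp
  qed
qed

lemma cone_bound:
  fixes a :: "'i \<Rightarrow> 'a::euclidean_space"
  assumes "finite J"
  shows "\<exists>M\<ge>0. \<forall>l. (\<forall>i\<in>J. 0 \<le> l i) \<longrightarrow> (\<exists>l'. (\<forall>i\<in>J. 0 \<le> l' i) \<and>
     (\<Sum>i\<in>J. l' i *\<^sub>R a i) = (\<Sum>i\<in>J. l i *\<^sub>R a i) \<and>
     (\<Sum>i\<in>J. l' i) \<le> M * norm (\<Sum>i\<in>J. l i *\<^sub>R a i))"
  using assms
proof (induction J rule: finite_psubset_induct)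
  case (psubset J)
  show ?case
  proof (cases "\<forall>m. (\<Sum>j\<in>J. m j *\<^sub>R a j) = 0 \<longrightarrow> (\<forall>j\<in>J. m j = 0)")
    case True
    have "\<forall>i\<in>J. \<exists>w. inner w (a i) = 1 \<and> (\<forall>j\<in>J. j \<noteq> i \<longrightarrow> inner w (a j) = 0)"
      using biorth[OF psubset.hyps(1) True] by blast
    then obtain W where W0: "\<forall>i\<in>J. inner (W i) (a i) = 1 \<and> (\<forall>j\<in>J. j \<noteq> i \<longrightarrow> inner (W i) (a j) = 0)"
      by (rule bchoice[THEN exE])
    then have W: "\<And>i. i \<in> J \<Longrightarrow> inner (W i) (a i) = 1 \<and> (\<forall>j\<in>J. j \<noteq> i \<longrightarrow> inner (W i) (a j) = 0)"
      by blast
    show ?thesis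
    proof (intro exI[of _ "\<Sum>i\<in>J. norm (W i)"] conjI allI impI)
      show "0 \<le> (\<Sum>i\<in>J. norm (W i))" by (simp add: sum_nonneg)
    next
      fix l :: "'i \<Rightarrow> real" assume l: "\<forall>i\<in>J. 0 \<le> l i"
      define d where "d = (\<Sum>i\<in>J. l i *\<^sub>R a i)"
      have li: "l i = inner (W i) d" if "i \<in> J" for i
      proof -
        have "inner (W i) d = (\<Sum>j\<in>J. l j * inner (W i) (a j))"
          unfolding d_def by (simp add: inner_sum_right)
        also have "\<dots> = (\<Sum>j\<in>J. if j = i then l j else 0)"
          by (rule sum.cong) (use W[OF that] in auto)
        also have "\<dots> = l i" using psubset.hyps(1) that by simp
        finally show ?thesis by simp
      qed
      have "(\<Sum>i\<in>J. l i) \<le> (\<Sum>i\<in>J. norm (W i) * norm d)"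
        by (rule sum_mono) (simp add: li norm_cauchy_schwarz)
      also have "\<dots> = (\<Sum>i\<in>J. norm (W i)) * norm d" by (simp add: sum_distrib_right)
      finally show "\<exists>l'. (\<forall>i\<in>J. 0 \<le> l' i) \<and> (\<Sum>i\<in>J. l' i *\<^sub>R a i) = (\<Sum>i\<in>J. l i *\<^sub>R a i) \<and>
          (\<Sum>i\<in>J. l' i) \<le> (\<Sum>i\<in>J. norm (W i)) * norm (\<Sum>i\<in>J. l i *\<^sub>R a i)"
        using l unfolding d_def by blast
    qed
  next
    case False
    then obtain m i0 where m: "(\<Sum>j\<in>J. m j *\<^sub>R a j) = 0" "i0 \<in> J" "m i0 \<noteq> 0" by blast
    define m' where "m' = (if m i0 > 0 then m else (\<lambda>j. - m j))"
    have m'0: "(\<Sum>j\<in>J. m' j *\<^sub>R a j) = 0" using m(1) by (simp add: m'_def sum_negf)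
    have m'i0: "m' i0 > 0" using m(3) by (simp add: m'_def)
    have "\<forall>i\<in>J. \<exists>M\<ge>0. \<forall>l. (\<forall>k\<in>J - {i}. 0 \<le> l k) \<longrightarrow> (\<exists>l'. (\<forall>k\<in>J - {i}. 0 \<le> l' k) \<and>
       (\<Sum>k\<in>J - {i}. l' k *\<^sub>R a k) = (\<Sum>k\<in>J - {i}. l k *\<^sub>R a k) \<and>
       (\<Sum>k\<in>J - {i}. l' k) \<le> M * norm (\<Sum>k\<in>J - {i}. l k *\<^sub>R a k))"
    proof
      fix i assume "i \<in> J"
      then have "J - {i} \<subset> J" by auto
      from psubset.IH[OF this] show "\<exists>M\<ge>0. \<forall>l. (\<forall>k\<in>J - {i}. 0 \<le> l k) \<longrightarrow> (\<exists>l'. (\<forall>k\<in>J - {i}. 0 \<le> l' k) \<and>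
       (\<Sum>k\<in>J - {i}. l' k *\<^sub>R a k) = (\<Sum>k\<in>J - {i}. l k *\<^sub>R a k) \<and>
       (\<Sum>k\<in>J - {i}. l' k) \<le> M * norm (\<Sum>k\<in>J - {i}. l k *\<^sub>R a k))" .
    qed
    then obtain MM where MM0: "\<forall>i\<in>J. MM i \<ge> 0 \<and> (\<forall>l. (\<forall>k\<in>J - {i}. 0 \<le> l k) \<longrightarrow> (\<exists>l'. (\<forall>k\<in>J - {i}. 0 \<le> l' k) \<and>
       (\<Sum>k\<in>J - {i}. l' k *\<^sub>R a k) = (\<Sum>k\<in>J - {i}. l k *\<^sub>R a k) \<and>
       (\<Sum>k\<in>J - {i}. l' k) \<le> MM i * norm (\<Sum>k\<in>J - {i}. l k *\<^sub>R a k)))"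
      by (rule bchoice[THEN exE])
    then have MM: "\<And>i. i \<in> J \<Longrightarrow> MM i \<ge> 0 \<and> (\<forall>l. (\<forall>k\<in>J - {i}. 0 \<le> l k) \<longrightarrow> (\<exists>l'. (\<forall>k\<in>J - {i}. 0 \<le> l' k) \<and>
       (\<Sum>k\<in>J - {i}. l' k *\<^sub>R a k) = (\<Sum>k\<in>J - {i}. l k *\<^sub>R a k) \<and>
       (\<Sum>k\<in>J - {i}. l' k) \<le> MM i * norm (\<Sum>k\<in>J - {i}. l k *\<^sub>R a k)))"
      by blast
    show ?thesis
    proof (intro exI[of _ "\<Sum>i\<in>J. MM i"] conjI allI impI)
      show "0 \<le> (\<Sum>i\<in>J. MM i)" using MM by (simp add: sum_nonneg)
    next
      fix l :: "'i \<Rightarrow> real" assume l: "\<forall>i\<in>J. 0 \<le> l i"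
      define d where "d = (\<Sum>i\<in>J. l i *\<^sub>R a i)"
      define P where "P = {i\<in>J. m' i > 0}"
      have finP: "finite P" "P \<noteq> {}" using psubset.hyps(1) m(2) m'i0 unfolding P_def by auto
      define q where "q = Min ((\<lambda>i. l i / m' i) ` P)"
      have "q \<in> (\<lambda>i. l i / m' i) ` P" unfolding q_def using finP by (intro Min_in) auto
      then obtain i1 where i1: "i1 \<in> P" "q = l i1 / m' i1" by auto
      have qle: "q \<le> l i / m' i" if "i \<in> P" for i
        unfolding q_def using finP that by (intro Min_le) auto
      have i1J: "i1 \<in> J" and m'i1: "m' i1 > 0" using i1 unfolding P_def by auto
      have q0: "q \<ge> 0" using i1 l i1J m'i1 by simp
      define l2 where "l2 i = l i - q * m' i" for i
      have l2nn: "0 \<le> l2 i" if "i \<in> J" for i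
      proof (cases "m' i > 0")
        case True
        then have "q \<le> l i / m' i" using qle that unfolding P_def by auto
        then show ?thesis using True unfolding l2_def by (simp add: field_simps)
      next
        case False
        then show ?thesis using l that q0 unfolding l2_def
          by (smt (verit) mult_nonneg_nonpos)
      qed
      have l2i1: "l2 i1 = 0" unfolding l2_def i1(2) using m'i1 by simp
      have "(\<Sum>i\<in>J. l2 i *\<^sub>R a i) = d - q *\<^sub>R (\<Sum>i\<in>J. m' i *\<^sub>R a i)"
        unfolding l2_def d_def by (simp add: scaleR_diff_left sum_subtractf scaleR_sum_right)
      then have sJ: "(\<Sum>i\<in>J. l2 i *\<^sub>R a i) = d" using m'0 by simp
      have "(\<Sum>i\<in>J. l2 i *\<^sub>R a i) = l2 i1 *\<^sub>R a i1 + (\<Sum>i\<in>J - {i1}. l2 i *\<^sub>R a i)"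
        using psubset.hyps(1) i1J by (simp add: sum.remove)
      then have sJ1: "(\<Sum>i\<in>J - {i1}. l2 i *\<^sub>R a i) = d" using sJ l2i1 by simp
      obtain l3 where l3: "\<forall>k\<in>J - {i1}. 0 \<le> l3 k"
        "(\<Sum>k\<in>J - {i1}. l3 k *\<^sub>R a k) = (\<Sum>k\<in>J - {i1}. l2 k *\<^sub>R a k)"
        "(\<Sum>k\<in>J - {i1}. l3 k) \<le> MM i1 * norm (\<Sum>k\<in>J - {i1}. l2 k *\<^sub>R a k)"
        using MM[OF i1J] l2nn by blast
      define l4 where "l4 k = (if k = i1 then 0 else l3 k)" for k
      have e1: "(\<Sum>k\<in>J. l4 k *\<^sub>R a k) = (\<Sum>k\<in>J - {i1}. l3 k *\<^sub>R a k)"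
      proof -
        have "(\<Sum>k\<in>J. l4 k *\<^sub>R a k) = l4 i1 *\<^sub>R a i1 + (\<Sum>k\<in>J - {i1}. l4 k *\<^sub>R a k)"
          using psubset.hyps(1) i1J by (simp add: sum.remove)
        also have "(\<Sum>k\<in>J - {i1}. l4 k *\<^sub>R a k) = (\<Sum>k\<in>J - {i1}. l3 k *\<^sub>R a k)"
          by (rule sum.cong) (auto simp: l4_def)
        finally show ?thesis by (simp add: l4_def)
      qed
      have e2: "(\<Sum>k\<in>J. l4 k) = (\<Sum>k\<in>J - {i1}. l3 k)"
      proof -
        have "(\<Sum>k\<in>J. l4 k) = l4 i1 + (\<Sum>k\<in>J - {i1}. l4 k)"
          using psubset.hyps(1) i1J by (simp add: sum.remove)
        also have "(\<Sum>k\<in>J - {i1}. l4 k) = (\<Sum>k\<in>J - {i1}. l3 k)"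
          by (rule sum.cong) (auto simp: l4_def)
        finally show ?thesis by (simp add: l4_def)
      qed
      have "MM i1 \<le> (\<Sum>i\<in>J. MM i)"
        by (rule member_le_sum[OF i1J]) (use MM psubset.hyps(1) in auto)
      then have "MM i1 * norm d \<le> (\<Sum>i\<in>J. MM i) * norm d" by (simp add: mult_right_mono)
      then show "\<exists>l'. (\<forall>i\<in>J. 0 \<le> l' i) \<and> (\<Sum>i\<in>J. l' i *\<^sub>R a i) = (\<Sum>i\<in>J. l i *\<^sub>R a i) \<and>
          (\<Sum>i\<in>J. l' i) \<le> (\<Sum>i\<in>J. MM i) * norm (\<Sum>i\<in>J. l i *\<^sub>R a i)"
        using l3 e1 e2 sJ1 unfolding d_def
        by (intro exI[of _ l4]) (auto simp: l4_def)
    qed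
  qed
qed

lemma farkas:
  fixes a :: "'i \<Rightarrow> 'a::euclidean_space"
  assumes fin: "finite I"
    and nd: "\<not> (\<exists>l. (\<forall>i\<in>I. 0 \<le> l i) \<and> d = (\<Sum>i\<in>I. l i *\<^sub>R a i))"
  shows "\<exists>h. inner h d > 0 \<and> (\<forall>i\<in>I. inner h (a i) \<le> 0)"
proof -
  define T where "T = {x. \<exists>l. (\<forall>i\<in>I. 0 \<le> l i) \<and> x = (\<Sum>i\<in>I. l i *\<^sub>R a i)}"
  have cT: "convex_cone T"
    unfolding convex_cone_iff
  proof (intro conjI ballI allI impI)
    show "0 \<in> T" unfolding T_def by (rule CollectI, rule exI[of _ "\<lambda>_. 0"]) simp
  next
    fix x y assume "x \<in> T" "y \<in> T"
    then obtain l1 l2 where "\<forall>i\<in>I. 0 \<le> l1 i" "x = (\<Sum>i\<in>I. l1 i *\<^sub>R a i)"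
      "\<forall>i\<in>I. 0 \<le> l2 i" "y = (\<Sum>i\<in>I. l2 i *\<^sub>R a i)" unfolding T_def by auto
    then show "x + y \<in> T" unfolding T_def
      by (intro CollectI exI[of _ "\<lambda>i. l1 i + l2 i"]) (auto simp: scaleR_add_left sum.distrib)
  next
    fix x and c :: real assume "x \<in> T" "0 \<le> c"
    then obtain l1 where "\<forall>i\<in>I. 0 \<le> l1 i" "x = (\<Sum>i\<in>I. l1 i *\<^sub>R a i)"
      unfolding T_def by auto
    then show "c *\<^sub>R x \<in> T" using \<open>0 \<le> c\<close> unfolding T_def
      by (intro CollectI exI[of _ "\<lambda>i. c * l1 i"]) (auto simp: scaleR_sum_right)
  qed
  have aT: "a ` I \<subseteq> T"
  proof
    fix x assume "x \<in> a ` I"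
    then obtain j where j: "j \<in> I" "x = a j" by auto
    have "(\<Sum>i\<in>I. (if i = j then 1 else 0) *\<^sub>R a i) = (\<Sum>i\<in>I. (if i = j then a i else 0))"
      by (rule sum.cong) auto
    also have "\<dots> = a j"
      using fin j(1) by (simp add: sum.delta)
    finally have "(\<Sum>i\<in>I. (if i = j then 1 else 0) *\<^sub>R a i) = a j" .
    then show "x \<in> T" unfolding T_def using j
      by (intro CollectI exI[of _ "\<lambda>i. if i = j then 1 else 0"]) auto
  qed
  define K where "K = convex_cone hull (a ` I)"
  have KT: "K \<subseteq> T" unfolding K_def
    by (rule hull_minimal[OF aT]) (use cT in simp)
  have dK: "d \<notin> K" using KT nd unfolding T_def by auto
  have clK: "closed K" unfolding K_def by (rule closed_convex_cone_hull) (use fin in simp)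
  have cvK: "convex K" unfolding K_def by (rule convex_convex_cone_hull)
  obtain c b where cb: "inner c d < b" "\<forall>x\<in>K. inner c x > b"
    using separating_hyperplane_closed_point[OF cvK clK dK] by blast
  have "0 \<in> K" unfolding K_def by (rule convex_cone_hull_contains_0)
  with cb have b0: "b < 0" by force
  have "inner c (a i) \<ge> 0" if "i \<in> I" for i
  proof (rule ccontr)
    assume neg: "\<not> inner c (a i) \<ge> 0"
    define t where "t = b / inner c (a i)"
    have t0: "t \<ge> 0" unfolding t_def using neg b0 by (simp add: divide_nonpos_neg)
    have "a i \<in> K" unfolding K_def using that by (intro hull_inc) auto
    then have "t *\<^sub>R a i \<in> K" unfolding K_def using t0
      by (intro convex_cone_hull_mul) auto
    with cb have "inner c (t *\<^sub>R a i) > b" by blast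
    moreover have "inner c (t *\<^sub>R a i) = b" unfolding t_def using neg by simp
    ultimately show False by simp
  qed
  then show ?thesis using cb b0
    by (intro exI[of _ "-c"]) auto
qed

lemma normal_cone_rep:
  fixes a :: "'i \<Rightarrow> 'a::euclidean_space"
  assumes fin: "finite I" and z: "\<forall>i\<in>I. inner (a i) z \<le> b i"
    and v: "\<forall>y. (\<forall>i\<in>I. inner (a i) y \<le> b i) \<longrightarrow> inner v (y - z) \<le> 0"
  shows "\<exists>l. (\<forall>i\<in>I. 0 \<le> l i) \<and> (\<forall>i\<in>I. inner (a i) z < b i \<longrightarrow> l i = 0)
             \<and> v = (\<Sum>i\<in>I. l i *\<^sub>R a i)"
proof -
  define J where "J = {i\<in>I. inner (a i) z = b i}"
  define N where "N = {i\<in>I. inner (a i) z < b i}"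
  have finJ: "finite J" "J \<subseteq> I" using fin unfolding J_def by auto
  have finN: "finite N" using fin unfolding N_def by auto
  have ex: "\<exists>l. (\<forall>i\<in>J. 0 \<le> l i) \<and> v = (\<Sum>i\<in>J. l i *\<^sub>R a i)"
  proof (rule ccontr)
    assume "\<not> ?thesis"
    then obtain h where h: "inner h v > 0" "\<forall>i\<in>J. inner h (a i) \<le> 0"
      using farkas[OF finJ(1)] by blast
    define t where "t = 1 / (1 + (\<Sum>i\<in>N. \<bar>inner (a i) h\<bar> / (b i - inner (a i) z)))"
    have S0: "(\<Sum>i\<in>N. \<bar>inner (a i) h\<bar> / (b i - inner (a i) z)) \<ge> 0"
      by (rule sum_nonneg) (auto simp: N_def)
    then have t0: "t > 0" unfolding t_def by simp
    have "inner (a i) (z + t *\<^sub>R h) \<le> b i" if i: "i \<in> I" for i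
    proof (cases "i \<in> J")
      case True
      then show ?thesis using h(2) t0
        by (auto simp: J_def inner_add_right inner_commute mult_nonneg_nonpos)
    next
      case False
      then have iN: "i \<in> N" using z i unfolding J_def N_def by force
      define d where "d = b i - inner (a i) z"
      have d0: "d > 0" using iN unfolding N_def d_def by simp
      have "\<bar>inner (a i) h\<bar> / d \<le> (\<Sum>i\<in>N. \<bar>inner (a i) h\<bar> / (b i - inner (a i) z))"
        unfolding d_def
        by (rule member_le_sum[OF iN _ finN]) (auto simp: N_def)
      then have "t * (\<bar>inner (a i) h\<bar> / d) \<le> t * (\<Sum>i\<in>N. \<bar>inner (a i) h\<bar> / (b i - inner (a i) z))"
        by (rule mult_left_mono) (use t0 in auto)
      also have "\<dots> < 1" unfolding t_def using S0 by (simp add: field_simps)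
      finally have "t * \<bar>inner (a i) h\<bar> < d" using d0 by (simp add: field_simps)
      then have "t * inner (a i) h < d" by (smt (verit) abs_ge_self mult_left_mono t0)
      then show ?thesis unfolding d_def by (simp add: inner_add_right)
    qed
    then have "inner v ((z + t *\<^sub>R h) - z) \<le> 0" using v by blast
    moreover have "inner v ((z + t *\<^sub>R h) - z) = t * inner h v" by (simp add: inner_commute)
    ultimately show False using t0 h(1) by (smt (verit) mult_pos_pos)
  qed
  then obtain l where l: "\<forall>i\<in>J. 0 \<le> l i" "v = (\<Sum>i\<in>J. l i *\<^sub>R a i)" by blast
  define l' where "l' i = (if i \<in> J then l i else 0)" for i
  have "(\<Sum>i\<in>I. l' i *\<^sub>R a i) = (\<Sum>i\<in>J. l' i *\<^sub>R a i)"
    by (rule sum.mono_neutral_right[OF fin finJ(2)]) (auto simp: l'_def)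
  also have "\<dots> = v" using l(2) by (simp add: l'_def)
  finally show ?thesis using l(1)
    by (intro exI[of _ l']) (auto simp: l'_def J_def)
qed

lemma hoffman:
  fixes a :: "'i \<Rightarrow> 'a::euclidean_space"
  assumes fin: "finite I" and ne: "S \<noteq> {}" and S: "S = {x. \<forall>i\<in>I. inner (a i) x \<le> b i}"
  shows "\<exists>\<tau>\<ge>0. \<forall>x. \<exists>s\<in>S. norm (x - s) \<le> \<tau> * (\<Sum>i\<in>I. max 0 (inner (a i) x - b i))"
proof -
  have "\<forall>J\<in>Pow I. \<exists>M\<ge>0. \<forall>l. (\<forall>i\<in>J. 0 \<le> l i) \<longrightarrow> (\<exists>l'. (\<forall>i\<in>J. 0 \<le> l' i) \<and>
     (\<Sum>i\<in>J. l' i *\<^sub>R a i) = (\<Sum>i\<in>J. l i *\<^sub>R a i) \<and>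
     (\<Sum>i\<in>J. l' i) \<le> M * norm (\<Sum>i\<in>J. l i *\<^sub>R a i))"
  proof
    fix J assume "J \<in> Pow I"
    then have "finite J" using fin finite_subset by auto
    then show "\<exists>M\<ge>0. \<forall>l. (\<forall>i\<in>J. 0 \<le> l i) \<longrightarrow> (\<exists>l'. (\<forall>i\<in>J. 0 \<le> l' i) \<and>
     (\<Sum>i\<in>J. l' i *\<^sub>R a i) = (\<Sum>i\<in>J. l i *\<^sub>R a i) \<and>
     (\<Sum>i\<in>J. l' i) \<le> M * norm (\<Sum>i\<in>J. l i *\<^sub>R a i))" by (rule cone_bound)
  qed
  then obtain MM where MM0: "\<forall>J\<in>Pow I. MM J \<ge> 0 \<and> (\<forall>l. (\<forall>i\<in>J. 0 \<le> l i) \<longrightarrow> (\<exists>l'. (\<forall>i\<in>J. 0 \<le> l' i) \<and>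
     (\<Sum>i\<in>J. l' i *\<^sub>R a i) = (\<Sum>i\<in>J. l i *\<^sub>R a i) \<and>
     (\<Sum>i\<in>J. l' i) \<le> MM J * norm (\<Sum>i\<in>J. l i *\<^sub>R a i)))"
    by (rule bchoice[THEN exE])
  define \<tau> where "\<tau> = (\<Sum>J\<in>Pow I. MM J)"
  have tau0: "\<tau> \<ge> 0" unfolding \<tau>_def using MM0 by (intro sum_nonneg) blast
  have clS: "closed S" unfolding S
    by (simp add: Collect_ball_eq closed_INT closed_halfspace_le)
  have cvS: "convex S" unfolding S
    by (simp add: Collect_ball_eq convex_INT convex_halfspace_le)
  show ?thesis
  proof (intro exI[of _ \<tau>] conjI allI tau0)
    fix x
    define z where "z = closest_point S x"
    define V where "V = (\<Sum>i\<in>I. max 0 (inner (a i) x - b i))"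
    have zS: "z \<in> S" unfolding z_def by (rule closest_point_in_set[OF clS ne])
    define d where "d = x - z"
    have nc: "\<forall>y. (\<forall>i\<in>I. inner (a i) y \<le> b i) \<longrightarrow> inner d (y - z) \<le> 0"
      unfolding d_def z_def using closest_point_dot[OF cvS clS] S by blast
    obtain l where l: "\<forall>i\<in>I. 0 \<le> l i" "\<forall>i\<in>I. inner (a i) z < b i \<longrightarrow> l i = 0"
        "d = (\<Sum>i\<in>I. l i *\<^sub>R a i)"
      using normal_cone_rep[OF fin _ nc] zS S by blast
    define J where "J = {i\<in>I. inner (a i) z = b i}"
    have JI: "J \<in> Pow I" "J \<subseteq> I" unfolding J_def by auto
    have zero: "l i = 0" if "i \<in> I - J" for i
    proof -
      have "inner (a i) z \<le> b i" using zS S that by blast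
      moreover have "inner (a i) z \<noteq> b i" using that unfolding J_def by blast
      ultimately show ?thesis using l(2) that by force
    qed
    have dJ: "d = (\<Sum>i\<in>J. l i *\<^sub>R a i)"
      unfolding l(3) using zero
      by (intro sum.mono_neutral_right[OF fin JI(2)]) simp
    have MJ: "\<forall>l. (\<forall>i\<in>J. 0 \<le> l i) \<longrightarrow> (\<exists>l'. (\<forall>i\<in>J. 0 \<le> l' i) \<and>
     (\<Sum>i\<in>J. l' i *\<^sub>R a i) = (\<Sum>i\<in>J. l i *\<^sub>R a i) \<and>
     (\<Sum>i\<in>J. l' i) \<le> MM J * norm (\<Sum>i\<in>J. l i *\<^sub>R a i))"
      using MM0 JI(1) by blast
    have "\<forall>i\<in>J. 0 \<le> l i" using l(1) JI(2) by blast
    with MJ obtain l' where l': "\<forall>i\<in>J. 0 \<le> l' i" "(\<Sum>i\<in>J. l' i *\<^sub>R a i) = d"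
        "(\<Sum>i\<in>J. l' i) \<le> MM J * norm d"
      unfolding dJ by blast
    have V0: "V \<ge> 0" unfolding V_def by (simp add: sum_nonneg)
    have termV: "inner (a i) x - b i \<le> V" if "i \<in> I" for i
    proof -
      have "inner (a i) x - b i \<le> max 0 (inner (a i) x - b i)" by simp
      also have "\<dots> \<le> V" unfolding V_def by (rule member_le_sum[OF that _ fin]) simp
      finally show ?thesis .
    qed
    have "inner d d = (\<Sum>i\<in>J. l' i * inner (a i) d)"
      by (subst (1) l'(2)[symmetric]) (simp add: inner_sum_left)
    also have "\<dots> = (\<Sum>i\<in>J. l' i * (inner (a i) x - b i))"
      by (rule sum.cong) (auto simp: J_def d_def inner_diff_right)
    also have "\<dots> \<le> (\<Sum>i\<in>J. l' i * V)"
      by (rule sum_mono) (use l'(1) termV JI(2) in \<open>auto intro: mult_left_mono\<close>)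
    also have "\<dots> = (\<Sum>i\<in>J. l' i) * V" by (simp add: sum_distrib_right)
    also have "\<dots> \<le> MM J * norm d * V" using l'(3) V0 by (simp add: mult_right_mono)
    also have "\<dots> \<le> \<tau> * norm d * V"
    proof -
      have "MM J \<le> \<tau>" unfolding \<tau>_def
        by (rule member_le_sum[OF JI(1)]) (use MM0 fin in auto)
      then show ?thesis using V0 by (simp add: mult_right_mono)
    qed
    finally have "norm d * norm d \<le> (\<tau> * V) * norm d"
      by (simp add: power2_eq_square[symmetric] mult_ac power2_norm_eq_inner)
    then have "norm d \<le> \<tau> * V"
      by (cases "norm d = 0") (use tau0 V0 in auto)
    then show "\<exists>s\<in>S. norm (x - s) \<le> \<tau> * (\<Sum>i\<in>I. max 0 (inner (a i) x - b i))"
      using zS unfolding d_def V_def by blast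
  qed
qed

lemma infeasible_gap:
  fixes a :: "'i \<Rightarrow> 'a::euclidean_space"
  assumes fin: "finite I" and em: "{x. \<forall>i\<in>I. inner (a i) x \<le> b i} = {}"
  shows "\<exists>\<delta>>0. \<forall>x. \<delta> \<le> (\<Sum>i\<in>I. max 0 (inner (a i) x - b i))"
proof (cases "\<exists>l. (\<forall>i\<in>I. 0 \<le> l i) \<and> ((0::'a), -1::real) = (\<Sum>i\<in>I. l i *\<^sub>R (a i, b i))")
  case True
  then obtain l where l: "\<forall>i\<in>I. 0 \<le> l i" "((0::'a), -1::real) = (\<Sum>i\<in>I. l i *\<^sub>R (a i, b i))"
    by blast
  have la: "(\<Sum>i\<in>I. l i *\<^sub>R a i) = 0"
    using arg_cong[OF l(2), of fst] by (simp add: fst_sum)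
  have lb: "(\<Sum>i\<in>I. l i * b i) = -1"
    using arg_cong[OF l(2), of snd] by (simp add: snd_sum)
  define L where "L = (\<Sum>i\<in>I. l i)"
  have key: "1 \<le> L * (\<Sum>i\<in>I. max 0 (inner (a i) x - b i))" for x
  proof -
    define V where "V = (\<Sum>i\<in>I. max 0 (inner (a i) x - b i))"
    have "(\<Sum>i\<in>I. l i * (inner (a i) x - b i)) = inner (\<Sum>i\<in>I. l i *\<^sub>R a i) x - (\<Sum>i\<in>I. l i * b i)"
      by (simp add: inner_sum_left right_diff_distrib sum_subtractf)
    then have "1 = (\<Sum>i\<in>I. l i * (inner (a i) x - b i))" using la lb by simp
    also have "\<dots> \<le> (\<Sum>i\<in>I. l i * V)"
    proof (rule sum_mono)
      fix i assume i: "i \<in> I"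
      have "inner (a i) x - b i \<le> max 0 (inner (a i) x - b i)" by simp
      also have "\<dots> \<le> V" unfolding V_def by (rule member_le_sum[OF i _ fin]) simp
      finally show "l i * (inner (a i) x - b i) \<le> l i * V" using l(1) i by (simp add: mult_left_mono)
    qed
    also have "\<dots> = L * V" unfolding L_def by (simp add: sum_distrib_right)
    finally show ?thesis unfolding V_def .
  qed
  have V0: "0 \<le> (\<Sum>i\<in>I. max 0 (inner (a i) x - b i))" for x by (simp add: sum_nonneg)
  have L0: "L > 0"
  proof -
    have "L \<ge> 0" unfolding L_def using l(1) by (simp add: sum_nonneg)
    moreover have "L \<noteq> 0" using key[of 0] by auto
    ultimately show ?thesis by simp
  qed
  show ?thesis
  proof (intro exI[of _ "1 / L"] conjI allI)
    show "0 < 1 / L" using L0 by simp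
    fix x show "1 / L \<le> (\<Sum>i\<in>I. max 0 (inner (a i) x - b i))"
      using key[of x] L0 by (simp add: field_simps)
  qed
next
  case False
  then obtain h where h: "inner h ((0::'a), -1::real) > 0" "\<forall>i\<in>I. inner h (a i, b i) \<le> 0"
    using farkas[OF fin, where a="\<lambda>i. (a i, b i)" and d="((0::'a), -1::real)"] by blast
  obtain h1 s where hs: "h = (h1, s)" by (cases h)
  have s0: "s < 0" using h(1) hs by (simp add: inner_Pair)
  have "(1 / - s) *\<^sub>R h1 \<in> {x. \<forall>i\<in>I. inner (a i) x \<le> b i}"
  proof (intro CollectI ballI)
    fix i assume "i \<in> I"
    then have "inner h1 (a i) + s * b i \<le> 0" using h(2) hs by (simp add: inner_Pair)
    then have "inner (a i) h1 \<le> (- s) * b i" by (simp add: inner_commute)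
    then show "inner (a i) ((1 / - s) *\<^sub>R h1) \<le> b i" using s0 by (simp add: field_simps)
  qed
  with em show ?thesis by blast
qed

lemma param_bound:
  fixes a :: "'i \<Rightarrow> 'a::euclidean_space" and e :: "'i \<Rightarrow> 'b::euclidean_space"
  assumes fin: "finite I"
  shows "\<exists>\<epsilon>>0. \<exists>\<tau>>0. \<forall>y w. norm y \<le> \<epsilon> \<longrightarrow> (\<forall>i\<in>I. inner (a i) w \<le> b i + inner (e i) y) \<longrightarrow>
     (\<exists>w'. (\<forall>i\<in>I. inner (a i) w' \<le> b i) \<and> norm (w - w') \<le> \<tau> * norm y)"
proof -
  define E where "E = (\<Sum>i\<in>I. norm (e i))"
  have E0: "E \<ge> 0" unfolding E_def by (simp add: sum_nonneg)
  have Vb: "(\<Sum>i\<in>I. max 0 (inner (a i) w - b i)) \<le> E * norm y"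
    if w: "\<forall>i\<in>I. inner (a i) w \<le> b i + inner (e i) y" for w y
  proof -
    have "(\<Sum>i\<in>I. max 0 (inner (a i) w - b i)) \<le> (\<Sum>i\<in>I. norm (e i) * norm y)"
    proof (rule sum_mono)
      fix i assume i: "i \<in> I"
      have "inner (e i) y \<le> norm (e i) * norm y" by (rule norm_cauchy_schwarz)
      then show "max 0 (inner (a i) w - b i) \<le> norm (e i) * norm y"
        using w i by (auto intro: mult_nonneg_nonneg)
    qed
    also have "\<dots> = E * norm y" unfolding E_def by (simp add: sum_distrib_right)
    finally show ?thesis .
  qed
  show ?thesis
  proof (cases "{x. \<forall>i\<in>I. inner (a i) x \<le> b i} = {}")
    case True
    obtain \<delta> where d: "\<delta> > 0" "\<forall>x. \<delta> \<le> (\<Sum>i\<in>I. max 0 (inner (a i) x - b i))"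
      using infeasible_gap[OF fin True] by blast
    have P: "\<forall>y w. norm y \<le> \<delta> / (2 * (E + 1)) \<longrightarrow> (\<forall>i\<in>I. inner (a i) w \<le> b i + inner (e i) y) \<longrightarrow>
     (\<exists>w'. (\<forall>i\<in>I. inner (a i) w' \<le> b i) \<and> norm (w - w') \<le> 1 * norm y)"
    proof (intro allI impI)
      fix y :: 'b and w :: 'a
      assume y: "norm y \<le> \<delta> / (2 * (E + 1))" and w: "\<forall>i\<in>I. inner (a i) w \<le> b i + inner (e i) y"
      have "\<delta> \<le> E * norm y" using d(2) Vb[OF w] by (meson order_trans)
      also have "\<dots> \<le> E * (\<delta> / (2 * (E + 1)))" by (rule mult_left_mono[OF y E0])
      also have "\<dots> < \<delta>" using d(1) E0 by (simp add: field_simps add_nonneg_pos)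
      finally show "\<exists>w'. (\<forall>i\<in>I. inner (a i) w' \<le> b i) \<and> norm (w - w') \<le> 1 * norm y" by simp
    qed
    have "0 < \<delta> / (2 * (E + 1))" using d E0 by simp
    with P show ?thesis using zero_less_one by blast
  next
    case False
    obtain \<tau>0 where t: "\<tau>0 \<ge> 0" "\<forall>x. \<exists>s\<in>{x. \<forall>i\<in>I. inner (a i) x \<le> b i}.
        norm (x - s) \<le> \<tau>0 * (\<Sum>i\<in>I. max 0 (inner (a i) x - b i))"
      using hoffman[OF fin False refl] by blast
    have P: "\<forall>y w. norm y \<le> 1 \<longrightarrow> (\<forall>i\<in>I. inner (a i) w \<le> b i + inner (e i) y) \<longrightarrow>
     (\<exists>w'. (\<forall>i\<in>I. inner (a i) w' \<le> b i) \<and> norm (w - w') \<le> (\<tau>0 * E + 1) * norm y)"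
    proof (intro allI impI)
      fix y :: 'b and w :: 'a
      assume w: "\<forall>i\<in>I. inner (a i) w \<le> b i + inner (e i) y"
      obtain s where s: "\<forall>i\<in>I. inner (a i) s \<le> b i"
        "norm (w - s) \<le> \<tau>0 * (\<Sum>i\<in>I. max 0 (inner (a i) w - b i))"
        using t(2) by blast
      have "norm (w - s) \<le> \<tau>0 * (E * norm y)"
        using s(2) Vb[OF w] t(1) by (meson mult_left_mono order_trans)
      also have "\<dots> \<le> (\<tau>0 * E + 1) * norm y" by (simp add: algebra_simps)
      finally show "\<exists>w'. (\<forall>i\<in>I. inner (a i) w' \<le> b i) \<and> norm (w - w') \<le> (\<tau>0 * E + 1) * norm y"
        using s(1) by blast
    qed
    have "0 < \<tau>0 * E + 1" using t(1) E0 by (simp add: add_nonneg_pos)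
    with P show ?thesis using zero_less_one by blast
  qed
qed

definition sysP :: "('a::euclidean_space \<Rightarrow> 'a) \<Rightarrow> ('k::finite \<Rightarrow> 'a) \<Rightarrow> ('k \<Rightarrow> real) \<Rightarrow> 'k set
   \<Rightarrow> 'a \<Rightarrow> 'a \<Rightarrow> real^'k \<Rightarrow> bool" where
  "sysP A a b K y p l \<longleftrightarrow> (\<forall>k. inner (a k) p \<le> b k + inner (a k) y) \<and> (\<forall>k\<in>K. b k + inner (a k) y \<le> inner (a k) p)
     \<and> (\<forall>k. 0 \<le> l $ k) \<and> (\<forall>k. k \<notin> K \<longrightarrow> l $ k \<le> 0) \<and> y + A p = (\<Sum>k\<in>UNIV. (l $ k) *\<^sub>R a k)"

definition sysQ :: "('a::euclidean_space \<Rightarrow> 'a) \<Rightarrow> ('k::finite \<Rightarrow> 'a) \<Rightarrow> ('k \<Rightarrow> real) \<Rightarrow> 'k set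
   \<Rightarrow> (('a \<times> (real^'k)) \<times> 'a \<times> real) set" where
  "sysQ A a b K =
     (\<lambda>k. ((a k, 0), a k, b k)) ` UNIV \<union>
     (\<lambda>k. ((- a k, 0), - a k, - b k)) ` K \<union>
     (\<lambda>k. ((0, - axis k 1), 0, 0)) ` UNIV \<union>
     (\<lambda>k. ((0, axis k 1), 0, 0)) ` (- K) \<union>
     (\<lambda>u. ((A u, \<chi> k. - inner u (a k)), - u, 0)) ` Basis \<union>
     (\<lambda>u. ((- A u, \<chi> k. inner u (a k)), u, 0)) ` Basis"

lemma finite_sysQ: "finite (sysQ A a b K)"
  unfolding sysQ_def by simp

lemma sysQ_iff:
  fixes A :: "'a::euclidean_space \<Rightarrow> 'a" and a :: "'k::finite \<Rightarrow> 'a"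
  assumes symA: "\<forall>x y. inner (A x) y = inner x (A y)"
  shows "(\<forall>q\<in>sysQ A a b K. inner (fst q) (p, l) \<le> snd (snd q) + inner (fst (snd q)) y)
     \<longleftrightarrow> sysP A a b K y p l"
proof -
  have lin: "inner ((A u, \<chi> k. - inner u (a k))) (p, l) = inner u (A p - (\<Sum>k\<in>UNIV. (l $ k) *\<^sub>R a k))"
    for u
    by (simp add: inner_Pair inner_vec_def symA inner_diff_right inner_sum_right sum_negf
        inner_commute[of "A u"] symA mult.commute)
  have lin2: "inner ((- A u, \<chi> k. inner u (a k))) (p, l) = - inner u (A p - (\<Sum>k\<in>UNIV. (l $ k) *\<^sub>R a k))"
    for u
    using lin[of u] by (simp add: inner_Pair inner_vec_def sum_negf)
  have ax1: "inner (axis k (1::real)) l = l $ k" for k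
    by (simp add: inner_commute[of "axis k 1"] inner_axis)
  have eqv: "(\<forall>u\<in>Basis. inner u (A p - (\<Sum>k\<in>UNIV. (l $ k) *\<^sub>R a k)) \<le> - inner u y \<and>
               - inner u (A p - (\<Sum>k\<in>UNIV. (l $ k) *\<^sub>R a k)) \<le> inner u y)
          \<longleftrightarrow> y + A p = (\<Sum>k\<in>UNIV. (l $ k) *\<^sub>R a k)"
  proof -
    have "(\<forall>u\<in>Basis. inner u (A p - (\<Sum>k\<in>UNIV. (l $ k) *\<^sub>R a k)) \<le> - inner u y \<and>
               - inner u (A p - (\<Sum>k\<in>UNIV. (l $ k) *\<^sub>R a k)) \<le> inner u y)
          \<longleftrightarrow> (\<forall>u\<in>Basis. inner u (y + A p - (\<Sum>k\<in>UNIV. (l $ k) *\<^sub>R a k)) = 0)"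
      by (rule ball_cong[OF refl]) (simp add: inner_diff_right inner_add_right, linarith)
    also have "\<dots> \<longleftrightarrow> (\<forall>u\<in>Basis. inner (y + A p - (\<Sum>k\<in>UNIV. (l $ k) *\<^sub>R a k)) u = 0)"
      by (simp add: inner_commute)
    also have "\<dots> \<longleftrightarrow> y + A p - (\<Sum>k\<in>UNIV. (l $ k) *\<^sub>R a k) = 0"
      using euclidean_all_zero_iff by blast
    finally show ?thesis by simp
  qed
  have step: "(\<forall>q\<in>sysQ A a b K. inner (fst q) (p, l) \<le> snd (snd q) + inner (fst (snd q)) y)
     \<longleftrightarrow> (\<forall>k\<in>UNIV. inner (a k, 0::real^'k) (p, l) \<le> b k + inner (a k) y) \<and>
         (\<forall>k\<in>K. inner (- a k, 0::real^'k) (p, l) \<le> - b k + inner (- a k) y) \<and>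
         (\<forall>k\<in>UNIV. inner (0::'a, - axis k (1::real)) (p, l) \<le> 0 + inner (0::'a) y) \<and>
         (\<forall>k\<in>- K. inner (0::'a, axis k (1::real)) (p, l) \<le> 0 + inner (0::'a) y) \<and>
         (\<forall>u\<in>Basis. inner ((A u, \<chi> k. - inner u (a k))) (p, l) \<le> 0 + inner (- u) y) \<and>
         (\<forall>u\<in>Basis. inner ((- A u, \<chi> k. inner u (a k))) (p, l) \<le> 0 + inner u y)"
    unfolding sysQ_def ball_Un Ball_image_comp by (simp only: o_def fst_conv snd_conv conj_assoc)
  show ?thesis
    unfolding step lin lin2 sysP_def eqv[symmetric]
    by (simp add: inner_Pair ax1 inner_minus_left inner_minus_right) (auto simp: algebra_simps)
qed

lemma main_generic:
  fixes A :: "'a::euclidean_space \<Rightarrow> 'a" and a :: "'k::finite \<Rightarrow> 'a" and b :: "'k \<Rightarrow> real"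
  assumes symA: "\<forall>x y. inner (A x) y = inner x (A y)"
    and ne: "C \<noteq> {}" and C: "C = {x. \<forall>k. inner (a k) x \<le> b k}"
  shows "\<exists>\<epsilon>>0. \<exists>\<tau>>0. \<forall>x. norm (x - closest_point C (x + A x)) \<le> \<epsilon> \<longrightarrow>
     (\<exists>p l. (\<forall>k. inner (a k) p \<le> b k) \<and> (\<forall>k. 0 \<le> l k) \<and> (\<forall>k. inner (a k) p < b k \<longrightarrow> l k = 0)
        \<and> A p = (\<Sum>k\<in>UNIV. l k *\<^sub>R a k) \<and> norm (x - p) \<le> \<tau> * norm (x - closest_point C (x + A x)))"
proof -
  have "\<forall>K\<in>(UNIV :: 'k set set). \<exists>\<epsilon>>0. \<exists>\<tau>>0. \<forall>y w. norm y \<le> \<epsilon> \<longrightarrow>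
     (\<forall>q\<in>sysQ A a b K. inner (fst q) w \<le> snd (snd q) + inner (fst (snd q)) y) \<longrightarrow>
     (\<exists>w'. (\<forall>q\<in>sysQ A a b K. inner (fst q) w' \<le> snd (snd q)) \<and> norm (w - w') \<le> \<tau> * norm y)"
    using param_bound[OF finite_sysQ, where a=fst and e="\<lambda>q. fst (snd q)" and b="\<lambda>q. snd (snd q)"] by blast
  then obtain EE where EE0: "\<forall>K\<in>(UNIV :: 'k set set). EE K > 0 \<and> (\<exists>\<tau>>0. \<forall>y w. norm y \<le> EE K \<longrightarrow>
     (\<forall>q\<in>sysQ A a b K. inner (fst q) w \<le> snd (snd q) + inner (fst (snd q)) y) \<longrightarrow>
     (\<exists>w'. (\<forall>q\<in>sysQ A a b K. inner (fst q) w' \<le> snd (snd q)) \<and> norm (w - w') \<le> \<tau> * norm y))"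
    by (rule bchoice[THEN exE]) (auto simp: Bex_def)
  then have "\<forall>K\<in>(UNIV :: 'k set set). \<exists>\<tau>. \<tau> > 0 \<and> (\<forall>y w. norm y \<le> EE K \<longrightarrow>
     (\<forall>q\<in>sysQ A a b K. inner (fst q) w \<le> snd (snd q) + inner (fst (snd q)) y) \<longrightarrow>
     (\<exists>w'. (\<forall>q\<in>sysQ A a b K. inner (fst q) w' \<le> snd (snd q)) \<and> norm (w - w') \<le> \<tau> * norm y))"
    by blast
  then obtain TT where TT0: "\<forall>K\<in>(UNIV :: 'k set set). TT K > 0 \<and> (\<forall>y w. norm y \<le> EE K \<longrightarrow>
     (\<forall>q\<in>sysQ A a b K. inner (fst q) w \<le> snd (snd q) + inner (fst (snd q)) y) \<longrightarrow>
     (\<exists>w'. (\<forall>q\<in>sysQ A a b K. inner (fst q) w' \<le> snd (snd q)) \<and> norm (w - w') \<le> TT K * norm y))"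
    by (rule bchoice[THEN exE]) blast
  define \<epsilon> where "\<epsilon> = Min (range EE)"
  define \<tau> where "\<tau> = (\<Sum>K\<in>UNIV. TT K)"
  have eps0: "\<epsilon> > 0" unfolding \<epsilon>_def using EE0 by (subst Min_gr_iff) auto
  have epsle: "\<epsilon> \<le> EE K" for K unfolding \<epsilon>_def by (rule Min_le) auto
  have taule: "TT K \<le> \<tau>" for K unfolding \<tau>_def
    by (rule member_le_sum) (use TT0 in \<open>auto intro: less_imp_le\<close>)
  have tau0: "\<tau> > 0" using taule[of "{}"] TT0 by (meson UNIV_I order_less_le_trans)
  have clC: "closed C" unfolding C
    by (simp add: Collect_all_eq closed_INT closed_halfspace_le)
  have cvC: "convex C" unfolding C
    by (simp add: Collect_all_eq convex_INT convex_halfspace_le)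
  have main: "\<exists>p l. (\<forall>k. inner (a k) p \<le> b k) \<and> (\<forall>k. 0 \<le> l k) \<and> (\<forall>k. inner (a k) p < b k \<longrightarrow> l k = 0)
        \<and> A p = (\<Sum>k\<in>UNIV. l k *\<^sub>R a k) \<and> norm (x - p) \<le> \<tau> * norm (x - closest_point C (x + A x))"
    if xr: "norm (x - closest_point C (x + A x)) \<le> \<epsilon>" for x
  proof -
    define z where "z = closest_point C (x + A x)"
    define y where "y = x - z"
    have zC: "z \<in> C" unfolding z_def by (rule closest_point_in_set[OF clC ne])
    then have zle: "\<forall>k. inner (a k) z \<le> b k" using C by blast
    have nc: "\<forall>c. (\<forall>k\<in>UNIV. inner (a k) c \<le> b k) \<longrightarrow> inner ((x + A x) - z) (c - z) \<le> 0"
      unfolding z_def using closest_point_dot[OF cvC clC] C by blast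
    obtain l where l: "\<forall>k\<in>UNIV. 0 \<le> l k" "\<forall>k\<in>UNIV. inner (a k) z < b k \<longrightarrow> l k = 0"
        "(x + A x) - z = (\<Sum>k\<in>UNIV. l k *\<^sub>R a k)"
      using normal_cone_rep[OF finite[of UNIV] _ nc] zle by blast
    define K where "K = {k. inner (a k) z = b k}"
    define lv :: "real^'k" where "lv = (\<chi> k. l k)"
    have sys: "sysP A a b K y x lv"
      unfolding sysP_def
    proof (intro conjI allI ballI impI)
      fix k
      show "inner (a k) x \<le> b k + inner (a k) y"
        using zle unfolding y_def by (simp add: inner_diff_right)
      show "0 \<le> lv $ k" using l(1) by (simp add: lv_def)
      show "lv $ k \<le> 0" if "k \<notin> K"
      proof -
        have "inner (a k) z < b k" using that zle[rule_format, of k] unfolding K_def by simp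
        then have "l k = 0" using l(2) by blast
        then show ?thesis by (simp add: lv_def)
      qed
    next
      fix k assume "k \<in> K"
      then show "b k + inner (a k) y \<le> inner (a k) x"
        unfolding K_def y_def by (simp add: inner_diff_right)
    next
      show "y + A x = (\<Sum>k\<in>UNIV. (lv $ k) *\<^sub>R a k)"
        using l(3) unfolding y_def lv_def by (simp add: algebra_simps)
    qed
    have yle: "norm y \<le> EE K" using xr epsle[of K] unfolding y_def z_def by linarith
    have inQ: "\<forall>q\<in>sysQ A a b K. inner (fst q) (x, lv) \<le> snd (snd q) + inner (fst (snd q)) y"
      using sysQ_iff[OF symA, of a b K x lv y] sys by simp
    have TTK: "\<forall>y w. norm y \<le> EE K \<longrightarrow>
     (\<forall>q\<in>sysQ A a b K. inner (fst q) w \<le> snd (snd q) + inner (fst (snd q)) y) \<longrightarrow>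
     (\<exists>w'. (\<forall>q\<in>sysQ A a b K. inner (fst q) w' \<le> snd (snd q)) \<and> norm (w - w') \<le> TT K * norm y)"
      using TT0 by blast
    obtain w' where w': "\<forall>q\<in>sysQ A a b K. inner (fst q) w' \<le> snd (snd q)"
        "norm ((x, lv) - w') \<le> TT K * norm y"
      using TTK yle inQ by blast
    obtain p' l' where pl: "w' = (p', l')" by (cases w')
    have s0: "sysP A a b K 0 p' l'"
      using w'(1) sysQ_iff[OF symA, of a b K p' l' 0] unfolding pl by simp
    show ?thesis
    proof (intro exI[of _ p'] exI[of _ "\<lambda>k. l' $ k"] conjI allI impI)
      fix k
      show "inner (a k) p' \<le> b k" using s0 unfolding sysP_def by simp
      show "0 \<le> l' $ k" using s0 unfolding sysP_def by simp
      assume lt: "inner (a k) p' < b k"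
      have "k \<notin> K"
      proof
        assume "k \<in> K"
        then have "b k \<le> inner (a k) p'" using s0 unfolding sysP_def by simp
        with lt show False by simp
      qed
      then have "l' $ k \<le> 0" using s0 unfolding sysP_def by blast
      moreover have "0 \<le> l' $ k" using s0 unfolding sysP_def by blast
      ultimately show "l' $ k = 0" by simp
    next
      show "A p' = (\<Sum>k\<in>UNIV. l' $ k *\<^sub>R a k)" using s0 unfolding sysP_def by simp
    next
      have "norm (x - p') \<le> norm ((x, lv) - w')" unfolding pl
        using norm_fst_le[of "x - p'" "lv - l'"] by simp
      also have "\<dots> \<le> TT K * norm y" by (rule w'(2))
      also have "\<dots> \<le> \<tau> * norm y" using taule[of K] by (simp add: mult_right_mono)
      finally show "norm (x - p') \<le> \<tau> * norm (x - closest_point C (x + A x))"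
        unfolding y_def z_def .
    qed
  qed
  show ?thesis using eps0 tau0 main by blast
qed

lemma inner_mat: "inner (x::real^'m^'n) y = (\<Sum>i\<in>UNIV. \<Sum>j\<in>UNIV. x$i$j * y$i$j)"
  by (simp add: inner_vec_def)

lemma inner_mult_left:
  fixes M :: "real^'n^'n" and x y :: "real^'m^'n"
  shows "inner (M ** x) y = inner x (transpose M ** y)"
proof -
  have "inner (M ** x) y = (\<Sum>i\<in>UNIV. \<Sum>j\<in>UNIV. \<Sum>k\<in>UNIV. M$i$k * x$k$j * y$i$j)"
    by (simp add: inner_mat matrix_matrix_mult_def sum_distrib_right)
  also have "\<dots> = (\<Sum>i\<in>UNIV. \<Sum>k\<in>UNIV. \<Sum>j\<in>UNIV. M$i$k * x$k$j * y$i$j)"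
    by (rule sum.cong[OF refl]) (rule sum.swap)
  also have "\<dots> = (\<Sum>k\<in>UNIV. \<Sum>i\<in>UNIV. \<Sum>j\<in>UNIV. M$i$k * x$k$j * y$i$j)"
    by (rule sum.swap)
  also have "\<dots> = (\<Sum>k\<in>UNIV. \<Sum>j\<in>UNIV. \<Sum>i\<in>UNIV. M$i$k * x$k$j * y$i$j)"
    by (rule sum.cong[OF refl]) (rule sum.swap)
  also have "\<dots> = inner x (transpose M ** y)"
    by (simp add: inner_mat matrix_matrix_mult_def transpose_def sum_distrib_left mult_ac)
  finally show ?thesis .
qed

lemma inner_mult_right:
  fixes N :: "real^'m^'m" and x y :: "real^'m^'n"
  shows "inner (x ** N) y = inner x (y ** transpose N)"
proof -
  have "inner (x ** N) y = (\<Sum>i\<in>UNIV. \<Sum>j\<in>UNIV. \<Sum>k\<in>UNIV. x$i$k * N$k$j * y$i$j)"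
    by (simp add: inner_mat matrix_matrix_mult_def sum_distrib_right)
  also have "\<dots> = (\<Sum>i\<in>UNIV. \<Sum>k\<in>UNIV. \<Sum>j\<in>UNIV. x$i$k * N$k$j * y$i$j)"
    by (rule sum.cong[OF refl]) (rule sum.swap)
  also have "\<dots> = inner x (y ** transpose N)"
    by (simp add: inner_mat matrix_matrix_mult_def transpose_def sum_distrib_left mult_ac)
  finally show ?thesis .
qed

lemma selfadj:
  fixes DX :: "real^'n^'n" and DY :: "real^'m^'m" and x y :: "real^'m^'n"
  assumes "transpose DX = DX" "transpose DY = DY"
  shows "inner (DX ** x ** DY) y = inner x (DX ** y ** DY)"
  by (simp add: inner_mult_left inner_mult_right assms matrix_mul_assoc)

lemma matrix_add_rdistrib': "((A::real^'m^'n) + B) ** C = (A ** C) + (B ** C)"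
  by (vector matrix_matrix_mult_def sum.distrib[symmetric] field_simps)

lemma linear_A: "linear (\<lambda>p::real^'m^'n. DX ** p ** (DY::real^'m^'m))"
  by (rule linearI) (simp_all add: matrix_add_ldistrib matrix_add_rdistrib' matrix_scalar_ac
      scalar_matrix_assoc)

lemma gw_obj_eq: "- trace (DX ** p ** DY ** transpose p) = - inner (DX ** p ** DY) (p::real^'m^'n)"
  by (simp add: trace_def inner_mat matrix_matrix_mult_def transpose_def)

definition Emat :: "'n \<Rightarrow> 'm \<Rightarrow> real^'m^'n" where
  "Emat i j = (\<chi> r c. if r = i then (if c = j then 1 else 0) else 0)"
definition Rmat :: "'n \<Rightarrow> real^'m^'n" where
  "Rmat i = (\<chi> r c. if r = i then 1 else 0)"
definition Cmat :: "'m \<Rightarrow> real^'m^'n" where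
  "Cmat j = (\<chi> r c. if c = j then 1 else 0)"

lemma sum_if_const: "(\<Sum>x\<in>A. if P then f x else 0) = (if P then sum f A else (0::real))"
  by auto

lemma inner_Emat: "inner (Emat i j) p = p$i$j"
  by (simp add: inner_mat Emat_def if_distrib[of "\<lambda>x. x * _"] sum_if_const cong: if_cong)

lemma inner_Rmat: "inner (Rmat i) p = (\<Sum>j\<in>UNIV. p$i$j)"
  by (simp add: inner_mat Rmat_def if_distrib[of "\<lambda>x. x * _"] sum_if_const cong: if_cong)

lemma inner_Cmat: "inner (Cmat j) p = (\<Sum>i\<in>UNIV. p$i$j)"
  by (simp add: inner_mat Cmat_def if_distrib[of "\<lambda>x. x * _"] sum_if_const cong: if_cong)

definition a1 :: "('n \<times> 'm) + ('n \<times> bool) \<Rightarrow> real^'m^'n" where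
  "a1 k = (case k of Inl (i, j) \<Rightarrow> - Emat i j | Inr (i, s) \<Rightarrow> (if s then Rmat i else - Rmat i))"
definition b1 :: "real^'n \<Rightarrow> ('n \<times> 'm) + ('n \<times> bool) \<Rightarrow> real" where
  "b1 \<mu> k = (case k of Inl _ \<Rightarrow> 0 | Inr (i, s) \<Rightarrow> (if s then \<mu>$i else - \<mu>$i))"
definition a2 :: "('n \<times> 'm) + ('m \<times> bool) \<Rightarrow> real^'m^'n" where
  "a2 k = (case k of Inl (i, j) \<Rightarrow> - Emat i j | Inr (j, s) \<Rightarrow> (if s then Cmat j else - Cmat j))"
definition b2 :: "real^'m \<Rightarrow> ('n \<times> 'm) + ('m \<times> bool) \<Rightarrow> real" where
  "b2 \<nu> k = (case k of Inl _ \<Rightarrow> 0 | Inr (j, s) \<Rightarrow> (if s then \<nu>$j else - \<nu>$j))"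

lemma all_sum_pair: "(\<forall>k::('a \<times> 'b) + ('c \<times> 'd). P k) \<longleftrightarrow> (\<forall>i j. P (Inl (i, j))) \<and> (\<forall>i s. P (Inr (i, s)))"
  by (metis sumE prod.exhaust)

lemma C1_eq: fixes \<mu> :: "real^'n" shows "(C1 \<mu> :: (real^'m^'n) set) = {x. \<forall>k. inner (a1 k) x \<le> b1 \<mu> k}"
proof -
  have "x *v (\<chi> j. 1) = \<mu> \<longleftrightarrow> (\<forall>i. (\<Sum>j\<in>UNIV. x$i$j) = \<mu>$i)" for x :: "real^'m^'n"
    by (simp add: vec_eq_iff matrix_vector_mult_def)
  then show ?thesis
    unfolding C1_def all_sum_pair
    by (auto simp: a1_def b1_def inner_Emat inner_Rmat inner_minus_left all_bool_eq intro: order_antisym)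
qed

lemma C2_eq: fixes \<nu> :: "real^'m" shows "(C2 \<nu> :: (real^'m^'n) set) = {x. \<forall>k. inner (a2 k) x \<le> b2 \<nu> k}"
proof -
  have "transpose x *v (\<chi> i. 1) = \<nu> \<longleftrightarrow> (\<forall>j. (\<Sum>i\<in>UNIV. x$i$j) = \<nu>$j)" for x :: "real^'m^'n"
    by (simp add: vec_eq_iff matrix_vector_mult_def transpose_def)
  then show ?thesis
    unfolding C2_def all_sum_pair
    by (auto simp: a2_def b2_def inner_Emat inner_Cmat inner_minus_left all_bool_eq intro: order_antisym)
qed

lemma all_sum: "(\<forall>k. P k) \<longleftrightarrow> (\<forall>x. P (Inl x)) \<and> (\<forall>y. P (Inr y))"
  by (metis sumE)

lemma sum_UNIV_sum:
  "(\<Sum>k\<in>(UNIV::('a::finite + 'b::finite) set). f k) = (\<Sum>k\<in>UNIV. f (Inl k)) + (\<Sum>k\<in>UNIV. f (Inr k))"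
  by (subst UNIV_Plus_UNIV[symmetric], subst sum.Plus) (auto simp: o_def)

lemma nc_lemma:
  fixes ak :: "'k::finite \<Rightarrow> 'a::real_inner"
  assumes p: "\<forall>k. inner (ak k) p \<le> bk k" and l: "\<forall>k. 0 \<le> l k"
    and comp: "\<forall>k. inner (ak k) p < bk k \<longrightarrow> l k = 0"
  shows "(\<Sum>k\<in>UNIV. l k *\<^sub>R ak k) \<in> normal_cone {x. \<forall>k. inner (ak k) x \<le> bk k} p"
  unfolding normal_cone_def
proof (intro CollectI ballI)
  fix y assume y: "y \<in> {x. \<forall>k. inner (ak k) x \<le> bk k}"
  have "inner (\<Sum>k\<in>UNIV. l k *\<^sub>R ak k) (y - p) = (\<Sum>k\<in>UNIV. l k * inner (ak k) (y - p))"
    by (simp add: inner_sum_left)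
  also have "\<dots> \<le> 0"
  proof (rule sum_nonpos)
    fix k
    show "l k * inner (ak k) (y - p) \<le> 0"
    proof (cases "inner (ak k) p < bk k")
      case True
      then show ?thesis using comp by simp
    next
      case False
      then have "inner (ak k) p = bk k" using p by (meson order_antisym not_less)
      then have "inner (ak k) (y - p) \<le> 0" using y by (simp add: inner_diff_right)
      then show ?thesis using l by (simp add: mult_nonneg_nonpos)
    qed
  qed
  finally show "inner (\<Sum>k\<in>UNIV. l k *\<^sub>R ak k) (y - p) \<le> 0" .
qed

lemma gw_deriv:
  fixes DX :: "real^'n^'n" and DY :: "real^'m^'m" and p :: "real^'m^'n"
  assumes "transpose DX = DX" "transpose DY = DY"
  shows "(gw_obj DX DY has_derivative (\<lambda>h. inner (- 2 *\<^sub>R (DX ** p ** DY)) h)) (at p)"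
proof -
  have eq: "gw_obj DX DY = (\<lambda>p. - inner (DX ** p ** DY) p)"
    by (rule ext) (simp add: gw_obj_def gw_obj_eq)
  have lin: "((\<lambda>p::real^'m^'n. DX ** p ** DY) has_derivative (\<lambda>p. DX ** p ** DY)) (at p)"
    by (rule linear_imp_has_derivative[OF linear_A])
  have "((\<lambda>p. - inner (DX ** p ** DY) p) has_derivative
        (\<lambda>h. - (inner (DX ** p ** DY) h + inner (DX ** h ** DY) p))) (at p)"
    by (intro has_derivative_minus has_derivative_inner[OF lin has_derivative_ident])
  moreover have "(\<lambda>h. - (inner (DX ** p ** DY) h + inner (DX ** h ** DY) p))
      = (\<lambda>h. inner (- 2 *\<^sub>R (DX ** p ** DY)) h)"
  proof (rule ext)
    fix h
    have "inner (DX ** h ** DY) p = inner (DX ** p ** DY) h"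
      using selfadj[OF assms, of h p] by (simp add: inner_commute)
    then show "- (inner (DX ** p ** DY) h + inner (DX ** h ** DY) p) = inner (- 2 *\<^sub>R (DX ** p ** DY)) h"
      by simp
  qed
  ultimately show ?thesis unfolding eq by simp
qed

theorem proposition1:
  fixes \<mu> :: "real^'n" and \<nu> :: "real^'m"
    and DX :: "real^'n^'n" and DY :: "real^'m^'m"
  assumes "\<forall>i. 0 \<le> \<mu> $ i" and "(\<Sum>i\<in>UNIV. \<mu> $ i) = 1"
    and "\<forall>j. 0 \<le> \<nu> $ j" and "(\<Sum>j\<in>UNIV. \<nu> $ j) = 1"
    and "transpose DX = DX" and "transpose DY = DY"
  shows "\<exists>\<epsilon>>0. \<exists>\<tau>>0. \<forall>p :: real^'m^'n.
    norm (p - closest_point (C1 \<mu> \<inter> C2 \<nu>) (p + DX ** p ** DY)) \<le> \<epsilon> \<longrightarrow>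
    infdist p (crit_set \<mu> \<nu> DX DY)
      \<le> \<tau> * norm (p - closest_point (C1 \<mu> \<inter> C2 \<nu>) (p + DX ** p ** DY))"
proof -
  define a :: "(('n \<times> 'm) + ('n \<times> bool)) + (('n \<times> 'm) + ('m \<times> bool)) \<Rightarrow> real^'m^'n"
    where "a = case_sum a1 a2"
  define b :: "(('n \<times> 'm) + ('n \<times> bool)) + (('n \<times> 'm) + ('m \<times> bool)) \<Rightarrow> real"
    where "b = case_sum (b1 \<mu>) (b2 \<nu>)"
  have Ceq: "C1 \<mu> \<inter> C2 \<nu> = {x. \<forall>k. inner (a k) x \<le> b k}"
    unfolding C1_eq C2_eq a_def b_def by (auto simp: all_sum)
  define p0 :: "real^'m^'n" where "p0 = (\<chi> i j. \<mu>$i * \<nu>$j)"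
  have "p0 \<in> C1 \<mu>"
    unfolding C1_def p0_def using assms(1,3,4)
    by (simp add: vec_eq_iff matrix_vector_mult_def sum_distrib_left[symmetric])
  moreover have "p0 \<in> C2 \<nu>"
    unfolding C2_def p0_def using assms(1,3,2)
    by (simp add: vec_eq_iff matrix_vector_mult_def transpose_def sum_distrib_right[symmetric])
  ultimately have ne: "C1 \<mu> \<inter> C2 \<nu> \<noteq> {}" by blast
  have symA: "\<forall>x y. inner (DX ** x ** DY) y = inner x (DX ** y ** DY)"
    using selfadj[OF assms(5,6)] by blast
  obtain \<epsilon> \<tau> where et: "\<epsilon> > 0" "\<tau> > 0" and
    main: "\<And>x. norm (x - closest_point (C1 \<mu> \<inter> C2 \<nu>) (x + DX ** x ** DY)) \<le> \<epsilon> \<Longrightarrow>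
     (\<exists>p l. (\<forall>k. inner (a k) p \<le> b k) \<and> (\<forall>k. 0 \<le> l k) \<and> (\<forall>k. inner (a k) p < b k \<longrightarrow> l k = 0)
        \<and> DX ** p ** DY = (\<Sum>k\<in>UNIV. l k *\<^sub>R a k)
        \<and> norm (x - p) \<le> \<tau> * norm (x - closest_point (C1 \<mu> \<inter> C2 \<nu>) (x + DX ** x ** DY)))"
    using main_generic[OF symA ne Ceq] by blast
  have P: "\<forall>x :: real^'m^'n. norm (x - closest_point (C1 \<mu> \<inter> C2 \<nu>) (x + DX ** x ** DY)) \<le> \<epsilon> \<longrightarrow>
    infdist x (crit_set \<mu> \<nu> DX DY)
      \<le> \<tau> * norm (x - closest_point (C1 \<mu> \<inter> C2 \<nu>) (x + DX ** x ** DY))"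
  proof (intro allI impI)
    fix x :: "real^'m^'n"
    assume xr: "norm (x - closest_point (C1 \<mu> \<inter> C2 \<nu>) (x + DX ** x ** DY)) \<le> \<epsilon>"
    obtain q l where ql: "\<forall>k. inner (a k) q \<le> b k" "\<forall>k. 0 \<le> l k"
        "\<forall>k. inner (a k) q < b k \<longrightarrow> l k = 0" "DX ** q ** DY = (\<Sum>k\<in>UNIV. l k *\<^sub>R a k)"
        "norm (x - q) \<le> \<tau> * norm (x - closest_point (C1 \<mu> \<inter> C2 \<nu>) (x + DX ** x ** DY))"
      using main[OF xr] by blast
    define u where "u = (\<Sum>k\<in>UNIV. (2 * l (Inl k)) *\<^sub>R a1 k)"
    define v where "v = (\<Sum>k\<in>UNIV. (2 * l (Inr k)) *\<^sub>R a2 k)"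
    have qC: "q \<in> C1 \<mu> \<inter> C2 \<nu>" using ql(1) Ceq by blast
    have u: "u \<in> normal_cone (C1 \<mu>) q"
      unfolding u_def C1_eq
      by (rule nc_lemma) (use ql(1-3) in \<open>auto simp: a_def b_def all_sum\<close>)
    have v: "v \<in> normal_cone (C2 \<nu>) q"
      unfolding v_def C2_eq
      by (rule nc_lemma) (use ql(1-3) in \<open>auto simp: a_def b_def all_sum\<close>)
    have "u + v = 2 *\<^sub>R (\<Sum>k\<in>UNIV. l k *\<^sub>R a k)"
      unfolding u_def v_def sum_UNIV_sum[of "\<lambda>k. l k *\<^sub>R a k"]
      by (simp add: a_def scaleR_add_right scaleR_sum_right)
    then have guv: "- 2 *\<^sub>R (DX ** q ** DY) + u + v = 0" using ql(4) by (simp add: algebra_simps)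
    have "q \<in> crit_set \<mu> \<nu> DX DY"
      unfolding crit_set_def
      using qC gw_deriv[OF assms(5,6), of q] u v guv by blast
    then have "infdist x (crit_set \<mu> \<nu> DX DY) \<le> dist x q" by (rule infdist_le)
    also have "\<dots> \<le> \<tau> * norm (x - closest_point (C1 \<mu> \<inter> C2 \<nu>) (x + DX ** x ** DY))"
      using ql(5) by (simp add: dist_norm)
    finally show "infdist x (crit_set \<mu> \<nu> DX DY)
      \<le> \<tau> * norm (x - closest_point (C1 \<mu> \<inter> C2 \<nu>) (x + DX ** x ** DY))" .
  qed
  show ?thesis using et P by blast
qed

end
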